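(* Let $m,n\ge2$ be integers and let $H$ be the graph on the vertex set $\{x_{i,j}: i\in[m], j\in[n]\}$ with edge set $\{\{x_{i,j},x_{i',j+1}\}: 1\le i<i'\le m,\ 1\le j\le n-1\}$. Then $H$ is a chordal bipartite graph.
   Context: A bipartite graph is chordal bipartite if every cycle of length at least six has a chord. *)

theory Defs
  imports Main
begin

definition simple_graph :: "'a set \<Rightarrow> ('a \<Rightarrow> 'a \<Rightarrow> bool) \<Rightarrow> bool" where
  "simple_graph V E \<longleftrightarrow>
     (\<forall>u v. E u v \<longrightarrow> u \<in> V \<and> v \<in> V \<and> u \<noteq> v \<and> E v u)"

definition bipartite :: "'a set \<Rightarrow> ('a \<Rightarrow> 'a \<Rightarrow> bool) \<Rightarrow> bool" where
  "bipartite V E \<longleftrightarrow>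
     (\<exists>A B. A \<union> B = V \<and> A \<inter> B = {} \<and>
        (\<forall>u v. E u v \<longrightarrow> (u \<in> A \<and> v \<in> B) \<or> (u \<in> B \<and> v \<in> A)))"

definition is_cycle :: "'a set \<Rightarrow> ('a \<Rightarrow> 'a \<Rightarrow> bool) \<Rightarrow> 'a list \<Rightarrow> bool" where
  "is_cycle V E vs \<longleftrightarrow>
     length vs \<ge> 3 \<and> distinct vs \<and> set vs \<subseteq> V \<and>
     (\<forall>i < length vs. E (vs ! i) (vs ! ((i + 1) mod length vs)))"

definition has_chord :: "('a \<Rightarrow> 'a \<Rightarrow> bool) \<Rightarrow> 'a list \<Rightarrow> bool" where
  "has_chord E vs \<longleftrightarrow>
     (\<exists>i < length vs. \<exists>j < length vs. i \<noteq> j \<and>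
        j \<noteq> (i + 1) mod length vs \<and> i \<noteq> (j + 1) mod length vs \<and>
        E (vs ! i) (vs ! j))"

definition chordal_bipartite :: "'a set \<Rightarrow> ('a \<Rightarrow> 'a \<Rightarrow> bool) \<Rightarrow> bool" where
  "chordal_bipartite V E \<longleftrightarrow> simple_graph V E \<and> bipartite V E \<and>
     (\<forall>vs. is_cycle V E vs \<and> length vs \<ge> 6 \<longrightarrow> has_chord E vs)"

definition H_verts :: "nat \<Rightarrow> nat \<Rightarrow> (nat \<times> nat) set" where
  "H_verts m n = {(i, j). 1 \<le> i \<and> i \<le> m \<and> 1 \<le> j \<and> j \<le> n}"

definition H_edge :: "nat \<Rightarrow> nat \<Rightarrow> (nat \<times> nat) \<Rightarrow> (nat \<times> nat) \<Rightarrow> bool" where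
  "H_edge m n u v \<longleftrightarrow>
     (\<exists>i i' j. 1 \<le> i \<and> i < i' \<and> i' \<le> m \<and> 1 \<le> j \<and> j \<le> n - 1 \<and>
        ((u = (i, j) \<and> v = (i', j + 1)) \<or> (v = (i, j) \<and> u = (i', j + 1))))"

end

theory Submission
  imports Defs
begin

lemma H_edge_iff:
  "H_edge m n u v \<longleftrightarrow> (u \<in> H_verts m n \<and> v \<in> H_verts m n \<and>
     ((snd v = snd u + 1 \<and> fst u < fst v) \<or> (snd u = snd v + 1 \<and> fst v < fst u)))"
proof
  assume "H_edge m n u v"
  then show "u \<in> H_verts m n \<and> v \<in> H_verts m n \<and>
     ((snd v = snd u + 1 \<and> fst u < fst v) \<or> (snd u = snd v + 1 \<and> fst v < fst u))"
    unfolding H_edge_def H_verts_def by auto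
next
  assume A: "u \<in> H_verts m n \<and> v \<in> H_verts m n \<and>
     ((snd v = snd u + 1 \<and> fst u < fst v) \<or> (snd u = snd v + 1 \<and> fst v < fst u))"
  obtain a b c d where u: "u = (a, b)" and v: "v = (c, d)" by (cases u, cases v) auto
  from A show "H_edge m n u v"
    unfolding H_edge_def H_verts_def u v
    apply (elim conjE disjE)
     apply (rule exI[of _ a], rule exI[of _ c], rule exI[of _ b], force)
    apply (rule exI[of _ c], rule exI[of _ a], rule exI[of _ d], force)
    done
qed

lemma pred_mod: "(x::nat) < k \<Longrightarrow> (x + k - 1) mod k = (if x = 0 then k - 1 else x - 1)"
proof -
  assume "x < k"
  show ?thesis
  proof (cases "x = 0")
    case True
    have "k - 1 < k" using \<open>x<k\<close> by simp
    then have "(k - 1) mod k = k - 1" by (rule mod_less)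
    then show ?thesis using True by simp
  next
    case False
    then have "x + k - 1 = (x - 1) + k" by simp
    then have "(x + k - 1) mod k = (x - 1) mod k" by simp
    also have "\<dots> = x - 1" using \<open>x<k\<close> by (simp add: mod_less)
    finally show ?thesis using False by simp
  qed
qed

lemma succ_mod: "(x::nat) < k \<Longrightarrow> (x + 1) mod k = (if x + 1 = k then 0 else x + 1)"
proof -
  assume "x < k"
  show ?thesis
  proof (cases "x + 1 = k")
    case True then show ?thesis by simp
  next
    case False then have "x + 1 < k" using \<open>x<k\<close> by simp
    then show ?thesis using False by (simp add: mod_less)
  qed
qed

theorem lemma3p4:
  fixes m n :: nat
  assumes "m \<ge> 2" and "n \<ge> 2"
  shows "chordal_bipartite (H_verts m n) (H_edge m n)"
proof -
  let ?V = "H_verts m n" and ?E = "H_edge m n"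
  have sg: "simple_graph ?V ?E"
    unfolding simple_graph_def H_edge_iff by auto
  have bp: "bipartite ?V ?E"
    unfolding bipartite_def
    apply (rule exI[of _ "{p \<in> ?V. odd (snd p)}"], rule exI[of _ "{p \<in> ?V. even (snd p)}"])
    unfolding H_edge_iff by auto
  have ch: "has_chord ?E vs" if cyc: "is_cycle ?V ?E vs" and len: "length vs \<ge> 6" for vs
  proof -
    define k where "k = length vs"
    define S where "S = set vs"
    have fin: "finite S" and ne: "S \<noteq> {}" using len unfolding S_def by auto
    have SV: "S \<subseteq> ?V" using cyc unfolding is_cycle_def S_def by auto
    have cE: "\<And>x. x < k \<Longrightarrow> ?E (vs ! x) (vs ! ((x + 1) mod k))"
      using cyc unfolding is_cycle_def k_def by auto
    have inS: "\<And>x. x < k \<Longrightarrow> vs ! x \<in> S" unfolding S_def k_def by simp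
    define J where "J = Max (snd ` S)"
    have Jmax: "\<And>p. p \<in> S \<Longrightarrow> snd p \<le> J" unfolding J_def using fin by auto
    have "J \<in> snd ` S" unfolding J_def using fin ne by simp
    then obtain p where pS: "p \<in> S" and pJ: "snd p = J" by (auto simp del: J_def)
    define C where "C = {p \<in> S. snd p = J}"
    have finC: "finite C" using fin unfolding C_def by auto
    have neC: "C \<noteq> {}" using pS pJ unfolding C_def by blast
    define a where "a = Min (fst ` C)"
    have amin: "\<And>p. p \<in> S \<Longrightarrow> snd p = J \<Longrightarrow> a \<le> fst p"
      unfolding a_def C_def using finC C_def by auto
    have "a \<in> fst ` C" unfolding a_def using finC neC by simp
    then obtain q where qS: "q \<in> S" and qJ: "snd q = J" and qa: "fst q = a"
      unfolding C_def by auto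
    obtain i where ik: "i < k" and qi: "vs ! i = q"
      using qS unfolding S_def k_def by (auto simp: in_set_conv_nth)
    have k6: "k \<ge> 6" using len k_def by simp
    define i1 where "i1 = (i + k - 1) mod k"
    define i0 where "i0 = (i1 + k - 1) mod k"
    define i3 where "i3 = (i + 1) mod k"
    define i4 where "i4 = (i3 + 1) mod k"
    have i1v: "i1 = (if i = 0 then k - 1 else i - 1)" unfolding i1_def using pred_mod[OF ik] .
    have i1k: "i1 < k" using i1v ik by auto
    have i0v: "i0 = (if i1 = 0 then k - 1 else i1 - 1)" unfolding i0_def using pred_mod[OF i1k] .
    have i0k: "i0 < k" using i0v i1k by auto
    have i3v: "i3 = (if i + 1 = k then 0 else i + 1)" unfolding i3_def using succ_mod[OF ik] .
    have i3k: "i3 < k" using i3v ik k6 by auto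
    have i4v: "i4 = (if i3 + 1 = k then 0 else i3 + 1)" unfolding i4_def using succ_mod[OF i3k] .
    have i4k: "i4 < k" using i4v i3k k6 by auto
    note s1 = succ_mod[OF i1k] and s0 = succ_mod[OF i0k] and s3 = succ_mod[OF i3k] and s4 = succ_mod[OF i4k]
    have idx: "i1 < k" "i0 < k" "i3 < k" "i4 < k"
      "(i1 + 1) mod k = i" "(i0 + 1) mod k = i1"
      "i0 \<noteq> i3" "i3 \<noteq> (i0 + 1) mod k" "i0 \<noteq> (i3 + 1) mod k"
      "i1 \<noteq> i4" "i4 \<noteq> (i1 + 1) mod k" "i1 \<noteq> (i4 + 1) mod k"
      unfolding s1 s0 s3 s4 using i1v i0v i3v i4v ik k6 i1k i0k i3k i4k
      by (auto split: if_splits)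
    define p0 where "p0 = vs ! i0"
    define p1 where "p1 = vs ! i1"
    define p3 where "p3 = vs ! i3"
    define p4 where "p4 = vs ! i4"
    have e0: "?E p0 p1" using cE[of i0] idx unfolding p0_def p1_def by simp
    have e1: "?E p1 q" using cE[of i1] idx qi unfolding p1_def by simp
    have e3: "?E q p3" using cE[of i] ik qi unfolding p3_def i3_def by simp
    have e4: "?E p3 p4" using cE[of i3] idx unfolding p3_def p4_def i4_def by simp
    have S0: "p0 \<in> S" and S1: "p1 \<in> S" and S3: "p3 \<in> S" and S4: "p4 \<in> S"
      using inS idx unfolding p0_def p1_def p3_def p4_def by auto
    have V0: "p0 \<in> ?V" and V1: "p1 \<in> ?V" and V3: "p3 \<in> ?V" and V4: "p4 \<in> ?V"
      using S0 S1 S3 S4 SV by auto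
    have c1: "snd p1 + 1 = J \<and> fst p1 < a"
      using e1 Jmax[OF S1] qJ qa unfolding H_edge_iff by auto
    have c3: "snd p3 + 1 = J \<and> fst p3 < a"
      using e3 Jmax[OF S3] qJ qa unfolding H_edge_iff by auto
    have c0: "(snd p0 + 1 = snd p1 \<and> fst p0 < fst p1) \<or> (snd p0 = J \<and> fst p1 < fst p0)"
      using e0 c1 unfolding H_edge_iff by auto
    have c4: "(snd p4 + 1 = snd p3 \<and> fst p4 < fst p3) \<or> (snd p4 = J \<and> fst p3 < fst p4)"
      using e4 c3 unfolding H_edge_iff by auto
    have a0: "snd p0 = J \<Longrightarrow> a \<le> fst p0" using amin S0 by auto
    have a4: "snd p4 = J \<Longrightarrow> a \<le> fst p4" using amin S4 by auto
    have "?E p0 p3 \<or> ?E p1 p4"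
      unfolding H_edge_iff using V0 V1 V3 V4 c0 c1 c3 c4 a0 a4 by auto
    then show ?thesis
      unfolding has_chord_def k_def[symmetric] p0_def p1_def p3_def p4_def
      using idx by blast
  qed
  show ?thesis unfolding chordal_bipartite_def using sg bp ch by blast
qed

end
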